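(* Let $n\geqslant m\geqslant2$. Then $\mathrm{SR}(n+2,m)=\mathrm{SR}(n,m)+\binom{m+2}{2}$. Furthermore, if $n+m$ is even, then $\mathrm{DR}(n+2,m)=\mathrm{DR}(n,m)+\binom{m+2}{2}$.
   Context: Let $p,q$ be distinct primes and $n,m$ positive integers. In $C_{p^nq^m}$ let $C_{p^aq^x}$ be the unique subgroup of order $p^aq^x$, and write $(a,x;b,y)$ for the pair of subgroups $(C_{p^aq^x},C_{p^bq^y})$ with $0\leqslant a\leqslant b\leqslant n$, $0\leqslant x\leqslant y\leqslant m$, $(a,x)\neq(b,y)$. Its midpoint is $(a+x+b+y)/2$, and $R_M$ (depending on $n,m$) is the set of all such pairs with midpoint $M$. The simple rainbow number $\mathrm{SR}(n,m)$ is $|R_{(n+m)/2}|$ if $n+m$ is odd, and $|R_{(n+m-1)/2}|$ (which equals $|R_{(n+m+1)/2}|$) if $n+m$ is even. For $n,m\geqslant2$ with $n+m$ even, the double rainbow number is $\mathrm{DR}(n,m)=|R_{(n+m)/2}|$. *)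

theory Defs
  imports Main
begin

text \<open>A pair of subgroups (C_{p^a q^x}, C_{p^b q^y}) of C_{p^n q^m} is encoded by its
exponent tuple (a,x,b,y).  Subgroups of the cyclic group are in bijection with
their orders, so this encoding is exactly the paper's notation (a,x;b,y).\<close>

definition subgroup_pairs :: "nat \<Rightarrow> nat \<Rightarrow> (nat \<times> nat \<times> nat \<times> nat) set" where
  "subgroup_pairs n m = {(a, x, b, y). a \<le> b \<and> b \<le> n \<and> x \<le> y \<and> y \<le> m \<and> (a, x) \<noteq> (b, y)}"

text \<open>R_M with M given via twice the midpoint, T = 2M (so midpoint M = T/2).\<close>
definition R2 :: "nat \<Rightarrow> nat \<Rightarrow> nat \<Rightarrow> (nat \<times> nat \<times> nat \<times> nat) set" where
  "R2 n m T = {(a, x, b, y) \<in> subgroup_pairs n m. a + x + b + y = T}"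

definition SR :: "nat \<Rightarrow> nat \<Rightarrow> nat" where
  "SR n m = (if odd (n + m) then card (R2 n m (n + m)) else card (R2 n m (n + m - 1)))"

definition DR :: "nat \<Rightarrow> nat \<Rightarrow> nat" where
  "DR n m = card (R2 n m (n + m))"

end

theory Submission
  imports Defs
begin

lemma R2_fin: "finite (R2 n m T)"
proof -
  have "R2 n m T \<subseteq> {0..n} \<times> {0..m} \<times> {0..n} \<times> {0..m}"
    by (auto simp: R2_def subgroup_pairs_def)
  then show ?thesis by (rule finite_subset) auto
qed

lemma cardP: "card {(x::nat, y). x \<le> y \<and> y \<le> m} = (m + 2) choose 2"
proof (induction m)
  case 0
  have "{(x::nat, y). x \<le> y \<and> y \<le> 0} = {(0,0)}" by auto
  then show ?case by (simp add: numeral_2_eq_2)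
next
  case (Suc m)
  have e: "{(x::nat, y). x \<le> y \<and> y \<le> Suc m} = {(x, y). x \<le> y \<and> y \<le> m} \<union> (\<lambda>x. (x, Suc m)) ` {0..Suc m}"
    by auto
  have f: "finite {(x::nat, y). x \<le> y \<and> y \<le> m}"
    by (rule finite_subset[of _ "{0..m} \<times> {0..m}"]) auto
  have "card ({(x::nat, y). x \<le> y \<and> y \<le> m} \<union> (\<lambda>x. (x, Suc m)) ` {0..Suc m})
     = card {(x::nat, y). x \<le> y \<and> y \<le> m} + card ((\<lambda>x. (x, Suc m)) ` {0..Suc m})"
    by (rule card_Un_disjoint) (use f in auto)
  also have "card ((\<lambda>x. (x, Suc m)) ` {0..Suc m}) = m + 2"
    by (subst card_image) (auto simp: inj_on_def)
  finally show ?case using Suc e by (simp add: numeral_2_eq_2)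
qed

lemma key:
  fixes n m T :: nat
  assumes "m \<le> n" "1 \<le> m" "n + m \<le> T + 1" "T \<le> n + m"
  shows "card (R2 (n+2) m (T+2)) = card (R2 n m T) + ((m + 2) choose 2)"
proof -
  define sh where "sh = (\<lambda>(a::nat, x::nat, b::nat, y::nat). (a+1, x, b+1, y))"
  define Q where "Q = {t \<in> R2 (n+2) m (T+2). fst t = 0 \<or> fst (snd (snd t)) = n+2}"
  define P where "P = {(x::nat, y). x \<le> y \<and> y \<le> m}"
  define ps where "ps = (\<lambda>(a::nat, x::nat, b::nat, y::nat). (x, y))"
  have inj: "inj_on sh (R2 n m T)" by (auto simp: sh_def inj_on_def)
  have U: "R2 (n+2) m (T+2) = sh ` R2 n m T \<union> Q"
  proof
    show "R2 (n+2) m (T+2) \<subseteq> sh ` R2 n m T \<union> Q"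
    proof
      fix t assume t: "t \<in> R2 (n+2) m (T+2)"
      obtain a x b y where tt: "t = (a,x,b,y)" by (cases t) auto
      show "t \<in> sh ` R2 n m T \<union> Q"
      proof (cases "a = 0 \<or> b = n+2")
        case True then show ?thesis using t tt by (auto simp: Q_def)
      next
        case False
        then have "(a-1, x, b-1, y) \<in> R2 n m T" using t tt
          by (auto simp: R2_def subgroup_pairs_def)
        moreover have "t = sh (a-1, x, b-1, y)" using False tt t by (auto simp: sh_def R2_def subgroup_pairs_def)
        ultimately show ?thesis by blast
      qed
    qed
  next
    show "sh ` R2 n m T \<union> Q \<subseteq> R2 (n+2) m (T+2)"
      by (auto simp: sh_def Q_def R2_def subgroup_pairs_def)
  qed
  have disj: "sh ` R2 n m T \<inter> Q = {}"
    by (auto simp: sh_def Q_def R2_def subgroup_pairs_def)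
  have finQ: "finite Q" using R2_fin[of "n+2" m "T+2"] by (auto simp: Q_def)
  have injps: "inj_on ps Q"
  proof (rule inj_onI)
    fix s t assume s: "s \<in> Q" and t: "t \<in> Q" and e: "ps s = ps t"
    obtain a x b y where ss: "s = (a,x,b,y)" by (cases s) auto
    obtain a' x' b' y' where tt: "t = (a',x',b',y')" by (cases t) auto
    show "s = t" using s t e ss tt assms
      by (auto simp: ps_def Q_def R2_def subgroup_pairs_def)
  qed
  have imps: "ps ` Q = P"
  proof
    show "ps ` Q \<subseteq> P" by (auto simp: ps_def Q_def P_def R2_def subgroup_pairs_def)
  next
    show "P \<subseteq> ps ` Q"
    proof
      fix p assume p: "p \<in> P"
      obtain x y where pp: "p = (x,y)" by (cases p) auto
      have xy: "x \<le> y" "y \<le> m" using p pp by (auto simp: P_def)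
      show "p \<in> ps ` Q"
      proof (cases "T - n \<le> x + y")
        case True
        have "(0, x, T+2-x-y, y) \<in> Q" using True xy assms
          by (auto simp: Q_def R2_def subgroup_pairs_def)
        then show ?thesis using pp by (force simp: ps_def)
      next
        case False
        have "(T-n-x-y, x, n+2, y) \<in> Q" using False xy assms
          by (auto simp: Q_def R2_def subgroup_pairs_def)
        then show ?thesis using pp by (force simp: ps_def)
      qed
    qed
  qed
  have cQ: "card Q = (m + 2) choose 2"
    using card_image[OF injps] imps cardP[of m] by (simp add: P_def)
  have "card (R2 (n+2) m (T+2)) = card (sh ` R2 n m T) + card Q"
    unfolding U by (rule card_Un_disjoint) (use R2_fin finQ disj in auto)
  also have "card (sh ` R2 n m T) = card (R2 n m T)" by (rule card_image[OF inj])
  finally show ?thesis using cQ by simp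
qed

theorem lemma7p10:
  fixes n m :: nat
  assumes "n \<ge> m" and "m \<ge> 2"
  shows "SR (n + 2) m = SR n m + ((m + 2) choose 2) \<and>
         (even (n + m) \<longrightarrow> DR (n + 2) m = DR n m + ((m + 2) choose 2))"
proof
  show "SR (n + 2) m = SR n m + ((m + 2) choose 2)"
  proof (cases "odd (n + m)")
    case True
    have "n + 2 + m = (n + m) + 2" by simp
    then show ?thesis using True key[of m n "n+m"] assms unfolding SR_def by simp
  next
    case False
    have "n + 2 + m - 1 = (n + m - 1) + 2" using assms by simp
    then show ?thesis using False key[of m n "n+m-1"] assms unfolding SR_def by simp
  qed
next
  show "even (n + m) \<longrightarrow> DR (n + 2) m = DR n m + ((m + 2) choose 2)"
    using key[of m n "n+m"] assms unfolding DR_def by (simp add: add.commute add.left_commute)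
qed

end
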